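(* Under A1, A2, A3 and A4, fiducial intervals are strictly nested. Moreover, for any $x\in\mathcal{X}$ the bounds of the interval are continuous in $\alpha$ and $\lambda_f(\theta,x)$ is continuous in $\theta$.
   Context: $\Theta$ is a connected open subset of $\mathbb{R}$, $\mathcal{X}\subseteq\mathbb{Z}$ consists of consecutive integers, $\mathrm{P}_\theta$ denotes probability under $P_\theta$. (A1) $\mathrm{P}_\theta(X=x)>0$ for all $(\theta,x)$; (A2) $\mathrm{P}_\theta(X\leq x)$ strictly decreasing in $\theta$ for each fixed $x\in\mathcal{X}\backslash\sup\mathcal{X}$; (A3) $\mathrm{P}_\theta(X=x)$ differentiable in $\theta$; (A4) for $x\in\mathcal{X}\backslash\sup\mathcal{X}$, $\lim_{\theta\to\inf\Theta}\mathrm{P}_\theta(X\leq x)=1$ and $\lim_{\theta\to\sup\Theta}\mathrm{P}_\theta(X\leq x)=0$. The fiducial $1-\alpha$ interval given observation $x$ is $(\theta_L,\theta_U)$ with $\sum_{k\leq x}\mathrm{P}_{\theta_L}(X=k)=\alpha/2$ and $\sum_{k\geq x}\mathrm{P}_{\theta_U}(X=k)=\alpha/2$. Its test p-value is $\lambda_f(\theta_0,x)=\min\big(2\sum_{k\leq x}\mathrm{P}_{\theta_0}(X=k),\,2\sum_{k\geq x}\mathrm{P}_{\theta_0}(X=k),\,1\big)$. An interval is strictly nested if the $1-\alpha$ interval is always a proper subset of the $1-\alpha_0$ interval when $1>\alpha>\alpha_0>0$. *)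

theory Defs
  imports "HOL-Analysis.Analysis" "HOL-Library.Extended_Real"
begin

text \<open>A discrete family: p theta k = P_theta(X = k), parameter set Theta (reals),
  support X (a set of consecutive integers).\<close>

definition consecutive :: "int set \<Rightarrow> bool" where
  "consecutive X \<longleftrightarrow> (\<forall>a\<in>X. \<forall>b\<in>X. \<forall>c. a \<le> c \<and> c \<le> b \<longrightarrow> c \<in> X)"

definition left_tail :: "(real \<Rightarrow> int \<Rightarrow> real) \<Rightarrow> int set \<Rightarrow> real \<Rightarrow> int \<Rightarrow> real" where
  "left_tail p X \<theta> x = infsum (p \<theta>) {k \<in> X. k \<le> x}"

definition right_tail :: "(real \<Rightarrow> int \<Rightarrow> real) \<Rightarrow> int set \<Rightarrow> real \<Rightarrow> int \<Rightarrow> real" where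
  "right_tail p X \<theta> x = infsum (p \<theta>) {k \<in> X. x \<le> k}"

definition theta_to_inf :: "real set \<Rightarrow> real filter" where
  "theta_to_inf \<Theta> = (if bdd_below \<Theta> then at_right (Inf \<Theta>) else at_bot)"

definition theta_to_sup :: "real set \<Rightarrow> real filter" where
  "theta_to_sup \<Theta> = (if bdd_above \<Theta> then at_left (Sup \<Theta>) else at_top)"

text \<open>Endpoints of the fiducial 1-alpha interval (as extended reals).
  theta_L solves sum_{k \<le> x} P(X=k) = alpha/2; when x = max X there is no solution
  and the endpoint is sup Theta.  theta_U solves sum_{k \<ge> x} P(X=k) = alpha/2; when
  x = min X the endpoint is inf Theta.\<close>
definition fid_theta_L :: "(real \<Rightarrow> int \<Rightarrow> real) \<Rightarrow> real set \<Rightarrow> int set \<Rightarrow> real \<Rightarrow> int \<Rightarrow> ereal" where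
  "fid_theta_L p \<Theta> X \<alpha> x =
     (if x + 1 \<in> X then ereal (THE \<theta>. \<theta> \<in> \<Theta> \<and> left_tail p X \<theta> x = \<alpha> / 2)
      else Sup (ereal ` \<Theta>))"

definition fid_theta_U :: "(real \<Rightarrow> int \<Rightarrow> real) \<Rightarrow> real set \<Rightarrow> int set \<Rightarrow> real \<Rightarrow> int \<Rightarrow> ereal" where
  "fid_theta_U p \<Theta> X \<alpha> x =
     (if x - 1 \<in> X then ereal (THE \<theta>. \<theta> \<in> \<Theta> \<and> right_tail p X \<theta> x = \<alpha> / 2)
      else Inf (ereal ` \<Theta>))"

text \<open>The fiducial interval: the open interval of parameters between the two endpoints
  (theta_U is the smaller one, theta_L the larger one).\<close>
definition fid_interval :: "(real \<Rightarrow> int \<Rightarrow> real) \<Rightarrow> real set \<Rightarrow> int set \<Rightarrow> real \<Rightarrow> int \<Rightarrow> real set" where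
  "fid_interval p \<Theta> X \<alpha> x =
     {\<theta> \<in> \<Theta>. fid_theta_U p \<Theta> X \<alpha> x < ereal \<theta> \<and> ereal \<theta> < fid_theta_L p \<Theta> X \<alpha> x}"

definition fid_pval :: "(real \<Rightarrow> int \<Rightarrow> real) \<Rightarrow> int set \<Rightarrow> real \<Rightarrow> int \<Rightarrow> real" where
  "fid_pval p X \<theta> x = min (2 * left_tail p X \<theta> x) (min (2 * right_tail p X \<theta> x) 1)"

end

theory Submission
  imports Defs
begin


lemma tail_cont:
  fixes p :: "real \<Rightarrow> int \<Rightarrow> real"
  assumes distr: "\<forall>\<theta>\<in>\<Theta>. (p \<theta> has_sum 1) X"
    and nn: "\<forall>\<theta>\<in>\<Theta>. \<forall>x\<in>X. p \<theta> x \<ge> 0"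
    and pc: "\<forall>k\<in>X. continuous (at \<theta>0 within \<Theta>) (\<lambda>t. p t k)"
    and t0: "\<theta>0 \<in> \<Theta>" and AX: "A \<subseteq> X"
  shows "continuous (at \<theta>0 within \<Theta>) (\<lambda>\<theta>. infsum (p \<theta>) A)"
proof -
  have key: "\<forall>\<^sub>F \<theta> in at \<theta>0 within \<Theta>. dist (infsum (p \<theta>) A) (infsum (p \<theta>0) A) < e" if e: "e > 0" for e
  proof -
    define \<epsilon> where "\<epsilon> = e / 4"
    have ep: "\<epsilon> > 0" using e by (simp add: \<epsilon>_def)
    have "\<forall>\<^sub>F F in finite_subsets_at_top X. dist (sum (p \<theta>0) F) 1 < \<epsilon>"
      using distr t0 ep unfolding has_sum_def tendsto_iff by blast
    then obtain F where F: "finite F" "F \<subseteq> X" "dist (sum (p \<theta>0) F) 1 < \<epsilon>"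
      unfolding eventually_finite_subsets_at_top by blast
    have c1: "continuous (at \<theta>0 within \<Theta>) (\<lambda>t. sum (p t) F)"
      using pc F(2) by (intro continuous_sum) auto
    have c2: "continuous (at \<theta>0 within \<Theta>) (\<lambda>t. sum (p t) (A \<inter> F))"
      using pc F(2) by (intro continuous_sum) auto
    have e1: "\<forall>\<^sub>F t in at \<theta>0 within \<Theta>. dist (sum (p t) F) (sum (p \<theta>0) F) < \<epsilon>"
      using c1 ep unfolding continuous_within tendsto_iff by blast
    have e2: "\<forall>\<^sub>F t in at \<theta>0 within \<Theta>. dist (sum (p t) (A \<inter> F)) (sum (p \<theta>0) (A \<inter> F)) < \<epsilon>"
      using c2 ep unfolding continuous_within tendsto_iff by blast
    have e3: "\<forall>\<^sub>F t in at \<theta>0 within \<Theta>. t \<in> \<Theta>"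
      using eventually_at_topological by blast
    have bnd: "infsum (p t) A = sum (p t) (A \<inter> F) + infsum (p t) (A - F)
         \<and> 0 \<le> infsum (p t) (A - F) \<and> infsum (p t) (A - F) \<le> 1 - sum (p t) F" if t: "t \<in> \<Theta>" for t
    proof -
      have sX: "p t summable_on X" using distr t summable_on_def by blast
      have sAF: "p t summable_on (A - F)" using sX AX by (meson summable_on_subset_banach Diff_subset order_trans)
      have sXF: "p t summable_on (X - F)" using sX by (meson summable_on_subset_banach Diff_subset)
      have "infsum (p t) A = infsum (p t) ((A \<inter> F) \<union> (A - F))" by (metis Int_Diff_Un)
      also have "\<dots> = infsum (p t) (A \<inter> F) + infsum (p t) (A - F)"
        using sAF F(1) by (intro infsum_Un_disjoint) auto
      finally have 1: "infsum (p t) A = sum (p t) (A \<inter> F) + infsum (p t) (A - F)" using F(1) by simp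
      have "1 = infsum (p t) X" using distr t by (metis infsumI)
      also have "X = F \<union> (X - F)" using F(2) by auto
      also have "infsum (p t) (F \<union> (X - F)) = sum (p t) F + infsum (p t) (X - F)"
        using sXF F(1) by (subst infsum_Un_disjoint) auto
      finally have 2: "infsum (p t) (X - F) = 1 - sum (p t) F" by simp
      have 3: "infsum (p t) (A - F) \<le> infsum (p t) (X - F)"
        using sAF sXF AX nn t by (intro infsum_mono2) auto
      have 4: "0 \<le> infsum (p t) (A - F)" using nn t AX by (intro infsum_nonneg) auto
      show ?thesis using 1 2 3 4 by simp
    qed
    show ?thesis
      using e1 e2 e3
    proof eventually_elim
      case (elim t)

      have a: "\<bar>sum (p \<theta>0) F - 1\<bar> < \<epsilon>" using F(3) by (simp add: dist_real_def)
      have b: "\<bar>sum (p t) F - sum (p \<theta>0) F\<bar> < \<epsilon>" using elim(1) by (simp add: dist_real_def)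
      have c: "\<bar>sum (p t) (A \<inter> F) - sum (p \<theta>0) (A \<inter> F)\<bar> < \<epsilon>" using elim(2) by (simp add: dist_real_def)
      note B1 = bnd[OF elim(3)] and B0 = bnd[OF t0]
      show ?case unfolding dist_real_def using a b c B1 B0 unfolding \<epsilon>_def
        by (simp only: abs_less_iff) linarith
    qed
  qed
  show ?thesis unfolding continuous_within tendsto_iff using key by blast
qed


lemma Theta_interval:
  fixes \<Theta> :: "real set"
  assumes "connected \<Theta>" "a \<in> \<Theta>" "b \<in> \<Theta>" "a \<le> x" "x \<le> b"
  shows "x \<in> \<Theta>"
  using assms connected_iff_interval by blast

lemma ev_inf:
  fixes \<Theta> :: "real set"
  assumes "open \<Theta>" "connected \<Theta>" "\<Theta> \<noteq> {}"
  shows "eventually (\<lambda>\<theta>. \<theta> \<in> \<Theta>) (theta_to_inf \<Theta>) \<and> theta_to_inf \<Theta> \<noteq> bot"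
proof -
  obtain t where t: "t \<in> \<Theta>" using assms(3) by blast
  show ?thesis
  proof (cases "bdd_below \<Theta>")
    case True
    have "\<forall>\<^sub>F \<theta> in at_right (Inf \<Theta>). \<theta> \<in> \<Theta>"
    proof -
      obtain e where e: "e > 0" "ball t e \<subseteq> \<Theta>" using assms(1) t open_contains_ball by blast
      have "t - e/2 \<in> \<Theta>" using e by (auto simp: dist_real_def subset_iff)
      hence lt: "Inf \<Theta> < t" using True e cInf_lower[of "t - e/2" \<Theta>] by linarith
      have "\<forall>\<^sub>F \<theta> in at_right (Inf \<Theta>). \<theta> < t" using lt eventually_at_right_field by blast
      moreover have "\<forall>\<^sub>F \<theta> in at_right (Inf \<Theta>). \<theta> > Inf \<Theta>" by (simp add: eventually_at_right_less)
      ultimately show ?thesis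
      proof eventually_elim
        case (elim \<theta>)
        then obtain s where "s \<in> \<Theta>" "s < \<theta>" using assms(3) by (meson cInf_lessD)
        then show ?case using Theta_interval[OF assms(2) _ t, of s \<theta>] elim by auto
      qed
    qed
    then show ?thesis using True by (simp add: theta_to_inf_def)
  next
    case False
    have "\<forall>\<^sub>F \<theta> in at_bot. \<theta> \<le> t" by (simp add: eventually_le_at_bot)
    hence "\<forall>\<^sub>F \<theta> in at_bot. \<theta> \<in> \<Theta>"
    proof eventually_elim
      case (elim \<theta>)
      from False obtain s where "s \<in> \<Theta>" "s < \<theta>" unfolding bdd_below_def by (meson not_le)
      then show ?case using Theta_interval[OF assms(2) _ t, of s \<theta>] elim by auto
    qed
    then show ?thesis using False by (simp add: theta_to_inf_def)
  qed
qed

lemma ev_sup: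
  fixes \<Theta> :: "real set"
  assumes "open \<Theta>" "connected \<Theta>" "\<Theta> \<noteq> {}"
  shows "eventually (\<lambda>\<theta>. \<theta> \<in> \<Theta>) (theta_to_sup \<Theta>) \<and> theta_to_sup \<Theta> \<noteq> bot"
proof -
  obtain t where t: "t \<in> \<Theta>" using assms(3) by blast
  show ?thesis
  proof (cases "bdd_above \<Theta>")
    case True
    have "\<forall>\<^sub>F \<theta> in at_left (Sup \<Theta>). \<theta> \<in> \<Theta>"
    proof -
      obtain e where e: "e > 0" "ball t e \<subseteq> \<Theta>" using assms(1) t open_contains_ball by blast
      have "t + e/2 \<in> \<Theta>" using e by (auto simp: dist_real_def subset_iff)
      hence lt: "t < Sup \<Theta>" using True e cSup_upper[of "t + e/2" \<Theta>] by linarith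
      have "\<forall>\<^sub>F \<theta> in at_left (Sup \<Theta>). \<theta> > t" using lt eventually_at_left_field by blast
      moreover have "\<forall>\<^sub>F \<theta> in at_left (Sup \<Theta>). \<theta> < Sup \<Theta>" by (simp add: eventually_at_filter)
      ultimately show ?thesis
      proof eventually_elim
        case (elim \<theta>)
        then obtain s where "s \<in> \<Theta>" "\<theta> < s" using assms(3) by (meson less_cSupD)
        then show ?case using Theta_interval[OF assms(2) t, of s \<theta>] elim by auto
      qed
    qed
    then show ?thesis using True by (simp add: theta_to_sup_def)
  next
    case False
    have "\<forall>\<^sub>F \<theta> in at_top. \<theta> \<ge> t" by (simp add: eventually_ge_at_top)
    hence "\<forall>\<^sub>F \<theta> in at_top. \<theta> \<in> \<Theta>"
    proof eventually_elim
      case (elim \<theta>)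
      from False obtain s where "s \<in> \<Theta>" "\<theta> < s" unfolding bdd_above_def by (meson not_le)
      then show ?case using Theta_interval[OF assms(2) t, of s \<theta>] elim by auto
    qed
    then show ?thesis using False by (simp add: theta_to_sup_def)
  qed
qed


definition ginv :: "(real \<Rightarrow> real) \<Rightarrow> real set \<Rightarrow> real \<Rightarrow> real" where
  "ginv f \<Theta> c = (THE \<theta>. \<theta> \<in> \<Theta> \<and> f \<theta> = c)"

context
  fixes f :: "real \<Rightarrow> real" and \<Theta> :: "real set"
  assumes Th: "open \<Theta>" "connected \<Theta>" "\<Theta> \<noteq> {}"
    and cont: "continuous_on \<Theta> f"
    and dec: "\<forall>a\<in>\<Theta>. \<forall>b\<in>\<Theta>. a < b \<longrightarrow> f b < f a"
    and l1: "(f \<longlongrightarrow> 1) (theta_to_inf \<Theta>)" and l0: "(f \<longlongrightarrow> 0) (theta_to_sup \<Theta>)"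
begin

lemma inv_ex1: assumes c: "0 < c" "c < 1" shows "\<exists>!\<theta>. \<theta> \<in> \<Theta> \<and> f \<theta> = c"
proof -
  have "\<forall>\<^sub>F \<theta> in theta_to_inf \<Theta>. \<theta> \<in> \<Theta> \<and> c < f \<theta>"
    using ev_inf[OF Th] order_tendstoD(1)[OF l1 c(2)] eventually_conj by blast
  then obtain a where a: "a \<in> \<Theta>" "c < f a" using ev_inf[OF Th] eventually_happens by blast
  have "\<forall>\<^sub>F \<theta> in theta_to_sup \<Theta>. \<theta> \<in> \<Theta> \<and> f \<theta> < c"
    using ev_sup[OF Th] order_tendstoD(2)[OF l0 c(1)] eventually_conj by blast
  then obtain b where b: "b \<in> \<Theta>" "f b < c" using ev_sup[OF Th] eventually_happens by blast
  have ab: "a < b"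
  proof (rule ccontr)
    assume "\<not> a < b" hence "b = a \<or> b < a" by auto
    then show False using a b dec by force
  qed
  have sub: "{a..b} \<subseteq> \<Theta>" using Theta_interval[OF Th(2) a(1) b(1)] by auto
  obtain t where t: "a \<le> t" "t \<le> b" "f t = c"
    using IVT2'[of f b c a] a b ab continuous_on_subset[OF cont sub] by auto
  have tT: "t \<in> \<Theta>" using t sub by auto
  show ?thesis
  proof (rule ex1I[of _ t])
    show "t \<in> \<Theta> \<and> f t = c" using tT t by auto
    fix s assume "s \<in> \<Theta> \<and> f s = c"
    then show "s = t"
    proof -
      assume s: "s \<in> \<Theta> \<and> f s = c"
      show "s = t"
      proof (rule ccontr)
        assume "s \<noteq> t" hence "s < t \<or> t < s" by auto
        then show False using s tT t dec by force
      qed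
    qed
  qed
qed


lemma ginv: assumes "0 < c" "c < 1" shows "ginv f \<Theta> c \<in> \<Theta>" "f (ginv f \<Theta> c) = c"
  using theI'[OF inv_ex1[OF assms]] unfolding ginv_def by auto

lemma ginv_eq: assumes "t \<in> \<Theta>" "f t = c" "0 < c" "c < 1" shows "ginv f \<Theta> c = t"
  unfolding ginv_def using the1_equality[OF inv_ex1[OF assms(3,4)]] assms by auto

lemma ginv_mono: assumes "0 < c" "c < c'" "c' < 1" shows "ginv f \<Theta> c' < ginv f \<Theta> c"
proof (rule ccontr)
  assume "\<not> ginv f \<Theta> c' < ginv f \<Theta> c"
  hence "ginv f \<Theta> c \<le> ginv f \<Theta> c'" by simp
  hence "ginv f \<Theta> c = ginv f \<Theta> c' \<or> ginv f \<Theta> c < ginv f \<Theta> c'" by auto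
  then have "f (ginv f \<Theta> c') \<le> f (ginv f \<Theta> c)" using dec ginv(1)[of c] ginv(1)[of c'] assms
    by force
  then show False using ginv(2)[of c] ginv(2)[of c'] assms by auto
qed

lemma ginv_cont: "continuous_on {0<..<1} (ginv f \<Theta>)"
  unfolding continuous_on_iff
proof (intro ballI allI impI)
  fix c and \<epsilon> :: real assume c: "c \<in> {0<..<1::real}" and ep: "0 < \<epsilon>"
  define t0 where "t0 = ginv f \<Theta> c"
  have t0: "t0 \<in> \<Theta>" "f t0 = c" using ginv[of c] c by (auto simp: t0_def)
  obtain \<delta> where d: "\<delta> > 0" "ball t0 \<delta> \<subseteq> \<Theta>" using Th(1) t0(1) open_contains_ball by blast
  define e where "e = min \<epsilon> \<delta> / 2"
  have e: "e > 0" "e < \<epsilon>" "e < \<delta>" using ep d by (auto simp: e_def)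
  have aT: "t0 - e \<in> \<Theta>" and bT: "t0 + e \<in> \<Theta>" using d e by (auto simp: dist_real_def subset_iff)
  have fa: "c < f (t0 - e)" using dec aT t0 e by force
  have fb: "f (t0 + e) < c" using dec bT t0 e by force
  define dd where "dd = min (f (t0 - e) - c) (c - f (t0 + e))"
  show "\<exists>d>0. \<forall>x'\<in>{0<..<1}. dist x' c < d \<longrightarrow> dist (ginv f \<Theta> x') (ginv f \<Theta> c) < \<epsilon>"
  proof (intro exI[of _ dd] conjI ballI impI)
    show "dd > 0" using fa fb by (simp add: dd_def)
    fix c' assume c': "c' \<in> {0<..<1::real}" and dc: "dist c' c < dd"
    have lo: "f (t0 + e) < c'" "c' < f (t0 - e)" using dc by (auto simp: dd_def dist_real_def)
    have g: "ginv f \<Theta> c' \<in> \<Theta>" "f (ginv f \<Theta> c') = c'" using ginv[of c'] c' by auto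
    have "t0 - e < ginv f \<Theta> c'"
    proof (rule ccontr)
      assume "\<not> t0 - e < ginv f \<Theta> c'"
      hence "ginv f \<Theta> c' = t0 - e \<or> ginv f \<Theta> c' < t0 - e" by auto
      then show False using dec g aT lo by force
    qed
    moreover have "ginv f \<Theta> c' < t0 + e"
    proof (rule ccontr)
      assume "\<not> ginv f \<Theta> c' < t0 + e"
      hence "ginv f \<Theta> c' = t0 + e \<or> t0 + e < ginv f \<Theta> c'" by auto
      then show False using dec g bT lo by force
    qed
    ultimately show "dist (ginv f \<Theta> c') (ginv f \<Theta> c) < \<epsilon>" using e by (auto simp: dist_real_def t0_def)
  qed
qed

end


lemma infT: fixes \<Theta> :: "real set" assumes "open \<Theta>" "t \<in> \<Theta>" shows "Inf (ereal ` \<Theta>) < ereal t"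
  proof -
    obtain e where e: "e > 0" "ball t e \<subseteq> \<Theta>" using assms open_contains_ball by blast
    have "t - e/2 \<in> \<Theta>" using e by (auto simp: dist_real_def subset_iff)
    hence "Inf (ereal ` \<Theta>) \<le> ereal (t - e/2)" by (intro Inf_lower imageI)
    also have "\<dots> < ereal t" using e by simp
    finally show ?thesis .
  qed
lemma supT: fixes \<Theta> :: "real set" assumes "open \<Theta>" "t \<in> \<Theta>" shows "ereal t < Sup (ereal ` \<Theta>)"
  proof -
    obtain e where e: "e > 0" "ball t e \<subseteq> \<Theta>" using assms open_contains_ball by blast
    have "t + e/2 \<in> \<Theta>" using e by (auto simp: dist_real_def subset_iff)
    hence "ereal (t + e/2) \<le> Sup (ereal ` \<Theta>)" by (intro Sup_upper imageI)
    have "ereal t < ereal (t + e/2)" using e by simp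
    also have "\<dots> \<le> Sup (ereal ` \<Theta>)" by fact
    finally show ?thesis .
  qed

theorem proposition8:
  fixes p :: "real \<Rightarrow> int \<Rightarrow> real" and \<Theta> :: "real set" and X :: "int set"
  assumes Theta: "open \<Theta>" "connected \<Theta>" "\<Theta> \<noteq> {}"
    and X: "consecutive X" "\<exists>a\<in>X. \<exists>b\<in>X. a \<noteq> b"
    and distr: "\<forall>\<theta>\<in>\<Theta>. (p \<theta> has_sum 1) X"
    and A1: "\<forall>\<theta>\<in>\<Theta>. \<forall>x\<in>X. p \<theta> x > 0"
    and A2: "\<forall>x\<in>X. x + 1 \<in> X \<longrightarrow>
               (\<forall>\<theta>1\<in>\<Theta>. \<forall>\<theta>2\<in>\<Theta>. \<theta>1 < \<theta>2 \<longrightarrow> left_tail p X \<theta>2 x < left_tail p X \<theta>1 x)"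
    and A3: "\<forall>x\<in>X. \<forall>\<theta>\<in>\<Theta>. (\<lambda>t. p t x) differentiable (at \<theta>)"
    and A4: "\<forall>x\<in>X. x + 1 \<in> X \<longrightarrow>
               ((\<lambda>\<theta>. left_tail p X \<theta> x) \<longlongrightarrow> 1) (theta_to_inf \<Theta>) \<and>
               ((\<lambda>\<theta>. left_tail p X \<theta> x) \<longlongrightarrow> 0) (theta_to_sup \<Theta>)"
  shows "(\<forall>x\<in>X. \<forall>\<alpha> \<alpha>0. 0 < \<alpha>0 \<and> \<alpha>0 < \<alpha> \<and> \<alpha> < 1 \<longrightarrow>
             fid_interval p \<Theta> X \<alpha> x \<subset> fid_interval p \<Theta> X \<alpha>0 x)
       \<and> (\<forall>x\<in>X. continuous_on {0<..<1} (\<lambda>\<alpha>. fid_theta_L p \<Theta> X \<alpha> x)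
                \<and> continuous_on {0<..<1} (\<lambda>\<alpha>. fid_theta_U p \<Theta> X \<alpha> x))
       \<and> (\<forall>x\<in>X. continuous_on \<Theta> (\<lambda>\<theta>. fid_pval p X \<theta> x))"
proof -
  have nn: "\<forall>\<theta>\<in>\<Theta>. \<forall>x\<in>X. p \<theta> x \<ge> 0" using A1 by (simp add: less_imp_le)
  have sumcont: "continuous_on \<Theta> (\<lambda>\<theta>. infsum (p \<theta>) A)" if AX: "A \<subseteq> X" for A
  proof -
    have "continuous (at \<theta>0 within \<Theta>) (\<lambda>\<theta>. infsum (p \<theta>) A)" if t0: "\<theta>0 \<in> \<Theta>" for \<theta>0
    proof (rule tail_cont[OF distr nn _ t0 AX], intro ballI)
      fix k assume "k \<in> X"
      then show "continuous (at \<theta>0 within \<Theta>) (\<lambda>t. p t k)"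
        using A3 t0 differentiable_imp_continuous_within differentiable_at_withinI by blast
    qed
    then show ?thesis by (simp add: continuous_on_eq_continuous_within)
  qed
  have Lcont: "continuous_on \<Theta> (\<lambda>\<theta>. left_tail p X \<theta> x)" for x
    unfolding left_tail_def by (rule sumcont) auto
  have Rcont: "continuous_on \<Theta> (\<lambda>\<theta>. right_tail p X \<theta> x)" for x
    unfolding right_tail_def by (rule sumcont) auto
  have split: "left_tail p X \<theta> (x - 1) + right_tail p X \<theta> x = 1" if t: "\<theta> \<in> \<Theta>" for \<theta> x
  proof -
    have sX: "p \<theta> summable_on X" using distr t summable_on_def by blast
    have s1: "p \<theta> summable_on {k \<in> X. k \<le> x - 1}" using sX by (rule summable_on_subset_banach) auto
    have s2: "p \<theta> summable_on {k \<in> X. x \<le> k}" using sX by (rule summable_on_subset_banach) auto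
    have "X = {k \<in> X. k \<le> x - 1} \<union> {k \<in> X. x \<le> k}" by auto
    hence "infsum (p \<theta>) X = left_tail p X \<theta> (x - 1) + right_tail p X \<theta> x"
      unfolding left_tail_def right_tail_def using s1 s2
      by (metis (no_types, lifting) infsum_Un_disjoint disjoint_iff mem_Collect_eq zle_diff1_eq linorder_not_le)
    moreover have "infsum (p \<theta>) X = 1" using distr t infsumI by blast
    ultimately show ?thesis by simp
  qed
  have Lmono: "left_tail p X \<theta> (x - 1) \<le> left_tail p X \<theta> x" if t: "\<theta> \<in> \<Theta>" for \<theta> x
  proof -
    have sX: "p \<theta> summable_on X" using distr t summable_on_def by blast
    have s1: "p \<theta> summable_on {k \<in> X. k \<le> x - 1}" using sX by (rule summable_on_subset_banach) auto
    have s2: "p \<theta> summable_on {k \<in> X. k \<le> x}" using sX by (rule summable_on_subset_banach) auto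
    show ?thesis unfolding left_tail_def using s1 s2 nn t by (intro infsum_mono2) auto
  qed
  have hyp: "continuous_on \<Theta> (\<lambda>\<theta>. left_tail p X \<theta> x) \<and>
     (\<forall>a\<in>\<Theta>. \<forall>b\<in>\<Theta>. a < b \<longrightarrow> left_tail p X b x < left_tail p X a x) \<and>
     ((\<lambda>\<theta>. left_tail p X \<theta> x) \<longlongrightarrow> 1) (theta_to_inf \<Theta>) \<and>
     ((\<lambda>\<theta>. left_tail p X \<theta> x) \<longlongrightarrow> 0) (theta_to_sup \<Theta>)" if "x \<in> X" "x + 1 \<in> X" for x
    using Lcont A2 A4 that by blast
  define gL where "gL x = ginv (\<lambda>\<theta>. left_tail p X \<theta> x) \<Theta>" for x
  have gLc: "continuous_on {0<..<1} (gL x)" if "x \<in> X" "x + 1 \<in> X" for x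
    unfolding gL_def using hyp[OF that] ginv_cont[OF Theta] by blast
  have gLmono: "gL x c' < gL x c" if "x \<in> X" "x + 1 \<in> X" "0 < c" "c < c'" "c' < 1" for x c c'
    unfolding gL_def using hyp[OF that(1,2)] ginv_mono[OF Theta, of _ c c'] that by blast
  have gLin: "gL x c \<in> \<Theta>" "left_tail p X (gL x c) x = c" if "x \<in> X" "x + 1 \<in> X" "0 < c" "c < 1" for x c
    unfolding gL_def using hyp[OF that(1,2)] ginv[OF Theta, of _ c] that by blast+
  have thL: "fid_theta_L p \<Theta> X \<alpha> x = ereal (gL x (\<alpha>/2))" if "x + 1 \<in> X" for x \<alpha>
    using that unfolding fid_theta_L_def gL_def ginv_def by simp
  have thU: "fid_theta_U p \<Theta> X \<alpha> x = ereal (gL (x - 1) (1 - \<alpha>/2))" if "x - 1 \<in> X" for x \<alpha>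
  proof -
    have "(\<lambda>\<theta>. \<theta> \<in> \<Theta> \<and> right_tail p X \<theta> x = \<alpha> / 2) = (\<lambda>\<theta>. \<theta> \<in> \<Theta> \<and> left_tail p X \<theta> (x - 1) = 1 - \<alpha>/2)"
      using split by (intro ext) (smt (verit))
    then show ?thesis using that unfolding fid_theta_U_def gL_def ginv_def by simp
  qed
  have P2: "continuous_on {0<..<1} (\<lambda>\<alpha>. fid_theta_L p \<Theta> X \<alpha> x)
                \<and> continuous_on {0<..<1} (\<lambda>\<alpha>. fid_theta_U p \<Theta> X \<alpha> x)" if x: "x \<in> X" for x
  proof
    show "continuous_on {0<..<1} (\<lambda>\<alpha>. fid_theta_L p \<Theta> X \<alpha> x)"
    proof (cases "x + 1 \<in> X")
      case True
      have "continuous_on {0<..<1} (\<lambda>\<alpha>. gL x (\<alpha>/2))"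
        by (rule continuous_on_compose2[OF gLc[OF x True]]) (auto intro!: continuous_intros)
      then show ?thesis using True by (simp add: thL continuous_on_ereal)
    next
      case False
      then show ?thesis by (simp add: fid_theta_L_def)
    qed
    show "continuous_on {0<..<1} (\<lambda>\<alpha>. fid_theta_U p \<Theta> X \<alpha> x)"
    proof (cases "x - 1 \<in> X")
      case True
      have "continuous_on {0<..<1} (\<lambda>\<alpha>. gL (x - 1) (1 - \<alpha>/2))"
        by (rule continuous_on_compose2[OF gLc[OF True]]) (auto intro!: continuous_intros simp: x)
      then show ?thesis using True by (simp add: thU continuous_on_ereal)
    next
      case False
      then show ?thesis by (simp add: fid_theta_U_def)
    qed
  qed
  have P3: "continuous_on \<Theta> (\<lambda>\<theta>. fid_pval p X \<theta> x)" for x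
    unfolding fid_pval_def using Lcont[of x] Rcont[of x] by (intro continuous_intros) auto
  have below: "x - 1 \<in> X" if x: "x \<in> X" "x + 1 \<notin> X" for x
  proof -
    obtain a b where ab: "a \<in> X" "b \<in> X" "a \<noteq> b" using X(2) by blast
    have "\<exists>m\<in>X. m < x"
    proof (rule ccontr)
      assume "\<not> (\<exists>m\<in>X. m < x)"
      hence "x \<le> a" "x \<le> b" using ab by force+
      then obtain c where c: "c \<in> X" "x < c"
      proof (cases "x < a")
        case True then show ?thesis using that ab by blast
      next
        case False then have "a = x" using \<open>x \<le> a\<close> by simp
        then have "x < b" using ab \<open>x \<le> b\<close> by simp
        then show ?thesis using that ab by blast
      qed
      have "x \<le> x + 1" "x + 1 \<le> c" using c by auto
      hence "x + 1 \<in> X" using X(1) x(1) c(1) unfolding consecutive_def by blast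
      then show False using x by simp
    qed
    then obtain m where "m \<in> X" "m < x" by blast
    moreover have "m \<le> x - 1" "x - 1 \<le> x" using \<open>m < x\<close> by auto
    ultimately show ?thesis using X(1) x(1) unfolding consecutive_def by blast
  qed
  have P1: "fid_interval p \<Theta> X \<alpha> x \<subset> fid_interval p \<Theta> X \<alpha>0 x"
    if x: "x \<in> X" and al: "0 < \<alpha>0" "\<alpha>0 < \<alpha>" "\<alpha> < 1" for x \<alpha> \<alpha>0
  proof -
    let ?L = "\<lambda>a. fid_theta_L p \<Theta> X a x" and ?U = "\<lambda>a. fid_theta_U p \<Theta> X a x"
    have Lle: "?L \<alpha> \<le> ?L \<alpha>0"
    proof (cases "x + 1 \<in> X")
      case True
      then show ?thesis using gLmono[OF x True, of "\<alpha>0/2" "\<alpha>/2"] al by (simp add: thL)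
    next
      case False then show ?thesis by (simp add: fid_theta_L_def)
    qed
    have Ule: "?U \<alpha>0 \<le> ?U \<alpha>"
    proof (cases "x - 1 \<in> X")
      case True
      then show ?thesis using gLmono[OF True _, of "1 - \<alpha>/2" "1 - \<alpha>0/2"] x al by (simp add: thU)
    next
      case False then show ?thesis by (simp add: fid_theta_U_def)
    qed
    have sub: "fid_interval p \<Theta> X \<alpha> x \<subseteq> fid_interval p \<Theta> X \<alpha>0 x"
      unfolding fid_interval_def using Lle Ule by (auto intro: order.strict_trans1 order.strict_trans2)
    have "\<exists>t. t \<in> fid_interval p \<Theta> X \<alpha>0 x \<and> t \<notin> fid_interval p \<Theta> X \<alpha> x"
    proof (cases "x + 1 \<in> X")
      case True
      define t where "t = gL x (\<alpha>/2)"
      have tT: "t \<in> \<Theta>" and Lt: "left_tail p X t x = \<alpha>/2" using gLin[OF x True, of "\<alpha>/2"] al by (auto simp: t_def)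
      have notin: "t \<notin> fid_interval p \<Theta> X \<alpha> x" by (simp add: fid_interval_def thL[OF True] t_def)
      have "ereal t < ?L \<alpha>0" using gLmono[OF x True, of "\<alpha>0/2" "\<alpha>/2"] al by (simp add: thL[OF True] t_def)
      moreover have "?U \<alpha>0 < ereal t"
      proof (cases "x - 1 \<in> X")
        case T2: True
        define u where "u = gL (x - 1) (1 - \<alpha>0/2)"
        have uT: "u \<in> \<Theta>" and Lu: "left_tail p X u (x - 1) = 1 - \<alpha>0/2"
          using gLin[OF T2, of "1 - \<alpha>0/2"] x al by (auto simp: u_def)
        have "left_tail p X t (x - 1) < left_tail p X u (x - 1)" using Lmono[OF tT, of x] Lt Lu al by simp
        hence "u < t" using hyp[OF T2] x uT tT by (smt (verit))
        then show ?thesis by (simp add: thU[OF T2] u_def)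
      next
        case False then show ?thesis using infT[OF Theta(1) tT] by (simp add: fid_theta_U_def)
      qed
      ultimately show ?thesis using notin tT by (auto simp: fid_interval_def)
    next
      case False
      have T2: "x - 1 \<in> X" using below[OF x False] .
      define t where "t = gL (x - 1) (1 - \<alpha>/2)"
      have tT: "t \<in> \<Theta>" using gLin[OF T2, of "1 - \<alpha>/2"] x al by (auto simp: t_def)
      have notin: "t \<notin> fid_interval p \<Theta> X \<alpha> x" by (simp add: fid_interval_def thU[OF T2] t_def)
      have "?U \<alpha>0 < ereal t" using gLmono[OF T2 _, of "1 - \<alpha>/2" "1 - \<alpha>0/2"] x al by (simp add: thU[OF T2] t_def)
      moreover have "ereal t < ?L \<alpha>0" using supT[OF Theta(1) tT] False by (simp add: fid_theta_L_def)
      ultimately show ?thesis using notin tT by (auto simp: fid_interval_def)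
    qed
    then show ?thesis using sub by blast
  qed
  show ?thesis using P1 P2 P3 by blast
qed
end
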